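(* Let $\mathcal{X}\subseteq\mathbb{R}^n$ be a compact set, $\mathcal{X}_0\subseteq\mathcal{X}$, and $f:\mathcal{X}\to\mathcal{X}$. Let $\mathcal{X}_{VF}\subseteq\mathcal{X}$ be partitioned as $\mathcal{X}_{VF}=\bigcup_{i=1}^{p}\mathcal{X}_{VF_i}$ for some $p\in\mathbb{N}$. Suppose there exist a function $\mathcal{T}:\mathcal{X}\times\mathcal{X}\to\mathbb{R}$ and functions $\mathcal{V}_i:\mathcal{X}\times\mathcal{X}\to\mathbb{R}_{\geq 0}$ (bounded from below), $1\le i\le p$, such that: (i) for all $x\in\mathcal{X}$: $\mathcal{T}(x,f(x))\geq 0$; (ii) for all $x,y\in\mathcal{X}$: if $\mathcal{T}(f(x),y)\geq 0$ then $\mathcal{T}(x,y)\geq 0$; (iii) for every $x_0\in\mathcal{X}_0$ and every $1\le i\le p$ there exists $\xi_i>0$ such that for all $z,z'\in\mathcal{X}_{VF_i}$: if $\mathcal{T}(x_0,z)\geq 0$ and $\mathcal{T}(z,z')\geq 0$, then $\mathcal{V}_i(x_0,z')\leq \mathcal{V}_i(x_0,z)-\xi_i$. Then for every $x_0\in\mathcal{X}_0$, the state sequence $\langle x_0,x_1,\ldots\rangle$ defined by $x_{k+1}=f(x_k)$ satisfies $x_k\in\mathcal{X}_{VF}$ for only finitely many $k\in\mathbb{N}$.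
   Context: This concerns a discrete-time dynamical system $(\mathcal{X},\mathcal{X}_0,f)$ with state set $\mathcal{X}$, initial set $\mathcal{X}_0$ and transition map $f$; its state sequences are $\langle x_0,x_1,\ldots\rangle$ with $x_0\in\mathcal{X}_0$ and $x_{k+1}=f(x_k)$. "Visited only finitely often" means only finitely many elements of the state sequence lie in the set. *)

theory Defs
  imports "HOL-Analysis.Analysis"
begin

definition state_seq :: "('a \<Rightarrow> 'a) \<Rightarrow> 'a \<Rightarrow> nat \<Rightarrow> 'a" where
  "state_seq f x0 k = (f ^^ k) x0"

end

theory Submission
  imports Defs
begin

theorem lemma1:
  fixes X X0 :: "'a::euclidean_space set"
    and f :: "'a \<Rightarrow> 'a"
    and p :: nat
    and XVF_i :: "nat \<Rightarrow> 'a set"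
    and XVF :: "'a set"
    and T :: "'a \<Rightarrow> 'a \<Rightarrow> real"
    and V :: "nat \<Rightarrow> 'a \<Rightarrow> 'a \<Rightarrow> real"
  assumes "compact X"
    and "X0 \<subseteq> X"
    and "\<forall>x\<in>X. f x \<in> X"
    and "XVF \<subseteq> X"
    and "XVF = (\<Union>i\<in>{1..p}. XVF_i i)"
    and "\<forall>i\<in>{1..p}. \<forall>j\<in>{1..p}. i \<noteq> j \<longrightarrow> XVF_i i \<inter> XVF_i j = {}"
    and "\<forall>i\<in>{1..p}. \<forall>x\<in>X. \<forall>y\<in>X. V i x y \<ge> 0"
    and "\<forall>x\<in>X. T x (f x) \<ge> 0"
    and "\<forall>x\<in>X. \<forall>y\<in>X. T (f x) y \<ge> 0 \<longrightarrow> T x y \<ge> 0"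
    and "\<forall>x0\<in>X0. \<forall>i\<in>{1..p}. \<exists>\<xi>>0. \<forall>z\<in>XVF_i i. \<forall>z'\<in>XVF_i i.
           T x0 z \<ge> 0 \<and> T z z' \<ge> 0 \<longrightarrow> V i x0 z' \<le> V i x0 z - \<xi>"
  shows "\<forall>x0\<in>X0. finite {k::nat. state_seq f x0 k \<in> XVF}"
  proof
  fix x0 assume x0: "x0 \<in> X0"
  define s where "s = state_seq f x0"
  have sS: "s (Suc k) = f (s k)" for k by (simp add: s_def state_seq_def)
  have sX: "s k \<in> X" for k
    by (induction k) (use assms(2,3) x0 sS in \<open>auto simp: s_def state_seq_def\<close>)
  have Tk: "d < k \<Longrightarrow> T (s (k - Suc d)) (s k) \<ge> 0" for d k
  proof (induction d)
    case 0
    then obtain m where "k = Suc m" by (cases k) auto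
    then show ?case using assms(8) sX sS by simp
  next
    case (Suc d)
    then have "T (s (k - Suc d)) (s k) \<ge> 0" by simp
    moreover have "s (k - Suc d) = f (s (k - Suc (Suc d)))"
      using Suc.prems sS by (metis Suc_diff_Suc Suc_lessD diff_Suc_less less_trans_Suc zero_less_Suc)
    ultimately show ?case using assms(9) sX by metis
  qed
  have Tjk: "j < k \<Longrightarrow> T (s j) (s k) \<ge> 0" for j k
    using Tk[of "k - Suc j" k] by (simp add: Suc_diff_Suc)
  have s0: "s 0 = x0" by (simp add: s_def state_seq_def)
  have fin: "finite {k. 0 < k \<and> s k \<in> XVF_i i}" if i: "i \<in> {1..p}" for i
  proof (rule ccontr)
    let ?K = "{k. 0 < k \<and> s k \<in> XVF_i i}"
    assume inf: "infinite ?K"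
    obtain \<xi> where xi: "\<xi> > 0" and dec: "\<forall>z\<in>XVF_i i. \<forall>z'\<in>XVF_i i.
           T x0 z \<ge> 0 \<and> T z z' \<ge> 0 \<longrightarrow> V i x0 z' \<le> V i x0 z - \<xi>"
      using assms(10) x0 i by blast
    define e where "e = enumerate ?K"
    have eK: "e n \<in> ?K" for n using enumerate_in_set[OF inf] e_def by simp
    have emono: "e n < e (Suc n)" for n using enumerate_mono[OF _ inf] e_def by simp
    have step: "V i x0 (s (e (Suc n))) \<le> V i x0 (s (e n)) - \<xi>" for n
    proof -
      have "T x0 (s (e n)) \<ge> 0" using Tjk[of 0 "e n"] eK[of n] s0 by simp
      moreover have "T (s (e n)) (s (e (Suc n))) \<ge> 0" using Tjk emono by blast
      ultimately show ?thesis using dec eK[of n] eK[of "Suc n"] by blast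
    qed
    have bnd: "V i x0 (s (e n)) \<le> V i x0 (s (e 0)) - real n * \<xi>" for n
    proof (induction n)
      case 0 then show ?case by simp
    next
      case (Suc n) then show ?case using step[of n] by (simp add: algebra_simps)
    qed
    obtain n where n: "real n > V i x0 (s (e 0)) / \<xi>" using reals_Archimedean2 by blast
    then have "real n * \<xi> > V i x0 (s (e 0))" using xi by (simp add: field_simps)
    then have "V i x0 (s (e n)) < 0" using bnd[of n] by linarith
    moreover have "V i x0 (s (e n)) \<ge> 0" using assms(7) i x0 assms(2) sX by blast
    ultimately show False by simp
  qed
  have "{k. s k \<in> XVF} \<subseteq> {0} \<union> (\<Union>i\<in>{1..p}. {k. 0 < k \<and> s k \<in> XVF_i i})"
    using assms(5) by auto
  moreover have "finite ({0} \<union> (\<Union>i\<in>{1..p}. {k. 0 < k \<and> s k \<in> XVF_i i}))"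
    using fin by auto
  ultimately show "finite {k::nat. state_seq f x0 k \<in> XVF}"
    unfolding s_def by (rule finite_subset)
qed

end
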